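(* Let $\mathcal{K}\subset L^2(G)$ be a reproducing kernel Hilbert space, let $\Lambda$ be a relatively separated family in $G$, and let $(g_\lambda)_{\lambda\in\Lambda}$ be a system of $w$-molecules in $\mathcal{K}$ for some admissible weight $w$. Then $(g_\lambda)_{\lambda\in\Lambda}$ is a Bessel sequence in $\mathcal{K}$, i.e. there is $B>0$ with $\sum_{\lambda}|\langle f,g_\lambda\rangle|^2\le B\|f\|^2$ for all $f\in\mathcal{K}$.
   Context: $G$ is a $\sigma$-compact locally compact group with left Haar measure $\mu_G$; $Q$ a fixed symmetric open relatively compact neighborhood of $e$. $M_Qf(x)=\operatorname{ess\,sup}_{y\in xQ}|f(y)|$, $M_Q^Rf(x)=\operatorname{ess\,sup}_{y\in Qx}|f(y)|$. Admissible weight: measurable submultiplicative $w:G\to[1,\infty)$. $\mathcal{W}_w(G)=\{f\in C(G): w\cdot M_Q^RM_Qf\in L^1(G)\}$. RKHS: closed separable subspace of $L^2(G)$ with bounded point evaluations. A family $\Lambda$ is relatively separated if $\sup_x\#(\Lambda\cap xQ)<\infty$. A system of $w$-molecules is a family $(g_\lambda)_{\lambda\in\Lambda}$ in $\mathcal{K}$ with $|g_\lambda(x)|\le\min\{\Phi(\lambda^{-1}x),\Phi(x^{-1}\lambda)\}$ for all $x,\lambda$, for some non-negative $\Phi\in\mathcal{W}_w(G)$. *)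

theory Defs
  imports "HOL-Analysis.Analysis" "HOL-Probability.Essential_Supremum"
begin

text \<open>The group G is the type 'g, written additively (group_add is NOT assumed
  commutative): x + y is the group product xy, -x the inverse, 0 the identity.\<close>

definition sigma_compact :: "'a::topological_space set \<Rightarrow> bool" where
  "sigma_compact S \<longleftrightarrow> (\<exists>C::nat \<Rightarrow> 'a set. (\<forall>n. compact (C n)) \<and> (\<Union>n. C n) = S)"

definition left_haar_measure :: "'g::{topological_group_add,t2_space} measure \<Rightarrow> bool" where
  "left_haar_measure \<mu> \<longleftrightarrow>
     sets \<mu> = sets borel \<and> space \<mu> = UNIV \<and>
     (\<forall>x A. A \<in> sets borel \<longrightarrow> emeasure \<mu> ((+) x ` A) = emeasure \<mu> A) \<and>
     (\<forall>K. compact K \<longrightarrow> emeasure \<mu> K < \<infinity>) \<and>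
     (\<forall>U. open U \<and> U \<noteq> {} \<longrightarrow> emeasure \<mu> U > 0) \<and>
     (\<forall>A. A \<in> sets borel \<longrightarrow>
        emeasure \<mu> A = (INF U\<in>{U. open U \<and> A \<subseteq> U}. emeasure \<mu> U)) \<and>
     (\<forall>U. open U \<longrightarrow>
        emeasure \<mu> U = (SUP K\<in>{K. compact K \<and> K \<subseteq> U}. emeasure \<mu> K))"

definition lc_group_setting :: "'g::{topological_group_add,t2_space} measure \<Rightarrow> 'g set \<Rightarrow> bool" where
  "lc_group_setting \<mu> Q \<longleftrightarrow>
     locally compact (UNIV :: 'g set) \<and> sigma_compact (UNIV :: 'g set) \<and>
     left_haar_measure \<mu> \<and>
     open Q \<and> 0 \<in> Q \<and> uminus ` Q = Q \<and> compact (closure Q)"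

definition max_left :: "'g::group_add measure \<Rightarrow> 'g set \<Rightarrow> ('g \<Rightarrow> ennreal) \<Rightarrow> 'g \<Rightarrow> ennreal" where
  "max_left \<mu> Q F x = esssup \<mu> (\<lambda>y. if y \<in> (\<lambda>q. x + q) ` Q then F y else 0)"

definition max_right :: "'g::group_add measure \<Rightarrow> 'g set \<Rightarrow> ('g \<Rightarrow> ennreal) \<Rightarrow> 'g \<Rightarrow> ennreal" where
  "max_right \<mu> Q F x = esssup \<mu> (\<lambda>y. if y \<in> (\<lambda>q. q + x) ` Q then F y else 0)"

definition admissible_weight :: "('g::{topological_group_add,t2_space} \<Rightarrow> real) \<Rightarrow> bool" where
  "admissible_weight w \<longleftrightarrow> w \<in> borel_measurable borel \<and> (\<forall>x. w x \<ge> 1) \<and>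
     (\<forall>x y. w (x + y) \<le> w x * w y)"

definition wiener_amalgam ::
  "'g::{topological_group_add,t2_space} measure \<Rightarrow> 'g set \<Rightarrow> ('g \<Rightarrow> real) \<Rightarrow> ('g \<Rightarrow> 'b::real_normed_vector) \<Rightarrow> bool" where
  "wiener_amalgam \<mu> Q w f \<longleftrightarrow> continuous_on UNIV f \<and>
     (let h = (\<lambda>x. ennreal (w x) * max_right \<mu> Q (max_left \<mu> Q (\<lambda>y. ennreal (norm (f y)))) x)
      in h \<in> borel_measurable \<mu> \<and> (\<integral>\<^sup>+ x. h x \<partial>\<mu>) < \<infinity>)"

definition square_integrable :: "'g measure \<Rightarrow> ('g \<Rightarrow> complex) \<Rightarrow> bool" where
  "square_integrable \<mu> f \<longleftrightarrow> f \<in> borel_measurable \<mu> \<and> integrable \<mu> (\<lambda>x. (cmod (f x))\<^sup>2)"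

definition L2_inner :: "'g measure \<Rightarrow> ('g \<Rightarrow> complex) \<Rightarrow> ('g \<Rightarrow> complex) \<Rightarrow> complex" where
  "L2_inner \<mu> f g = (LINT x|\<mu>. f x * cnj (g x))"

definition L2_norm :: "'g measure \<Rightarrow> ('g \<Rightarrow> complex) \<Rightarrow> real" where
  "L2_norm \<mu> f = sqrt (LINT x|\<mu>. (cmod (f x))\<^sup>2)"

text \<open>Elements are represented by their (unique,
  because of bounded point evaluations) pointwise-defined representatives.\<close>
definition rkhs :: "'g measure \<Rightarrow> ('g \<Rightarrow> complex) set \<Rightarrow> bool" where
  "rkhs \<mu> K \<longleftrightarrow>
     (\<forall>f\<in>K. square_integrable \<mu> f) \<and>
     (\<lambda>x. 0) \<in> K \<and>
     (\<forall>f\<in>K. \<forall>g\<in>K. \<forall>c::complex. (\<lambda>x. f x + c * g x) \<in> K) \<and>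
     (\<forall>fs h. (\<forall>n. fs n \<in> K) \<and> square_integrable \<mu> h \<and>
         (\<lambda>n. L2_norm \<mu> (\<lambda>x. fs n x - h x)) \<longlonglongrightarrow> 0 \<longrightarrow>
         (\<exists>k\<in>K. AE x in \<mu>. k x = h x)) \<and>
     (\<exists>D\<subseteq>K. countable D \<and> (\<forall>f\<in>K. \<forall>\<epsilon>>0. \<exists>d\<in>D. L2_norm \<mu> (\<lambda>x. f x - d x) < \<epsilon>)) \<and>
     (\<forall>x. \<exists>C. \<forall>f\<in>K. cmod (f x) \<le> C * L2_norm \<mu> f)"

definition rel_separated :: "'g::group_add set \<Rightarrow> ('i \<Rightarrow> 'g) \<Rightarrow> bool" where
  "rel_separated Q lam \<longleftrightarrow>
     (\<exists>N::nat. \<forall>x. finite {i. lam i \<in> (\<lambda>q. x + q) ` Q} \<and> card {i. lam i \<in> (\<lambda>q. x + q) ` Q} \<le> N)"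

definition molecules ::
  "'g::{topological_group_add,t2_space} measure \<Rightarrow> 'g set \<Rightarrow> ('g \<Rightarrow> real) \<Rightarrow> ('g \<Rightarrow> complex) set
     \<Rightarrow> ('i \<Rightarrow> 'g) \<Rightarrow> ('i \<Rightarrow> 'g \<Rightarrow> complex) \<Rightarrow> bool" where
  "molecules \<mu> Q w K lam g \<longleftrightarrow> (\<forall>i. g i \<in> K) \<and>
     (\<exists>\<Phi>::'g \<Rightarrow> real. (\<forall>x. \<Phi> x \<ge> 0) \<and> wiener_amalgam \<mu> Q w \<Phi> \<and>
        (\<forall>i x. cmod (g i x) \<le> min (\<Phi> (- lam i + x)) (\<Phi> (- x + lam i))))"

end

theory Submission
  imports Defs
begin

lemma translate_eq_vimage:
  fixes y :: "'g::group_add"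
  shows "(+) y ` Q = (\<lambda>x. - y + x) -` Q"
proof
  show "(+) y ` Q \<subseteq> (\<lambda>x. - y + x) -` Q" by (auto simp: minus_add_cancel)
  show "(\<lambda>x. - y + x) -` Q \<subseteq> (+) y ` Q"
  proof
    fix x assume "x \<in> (\<lambda>x. - y + x) -` Q"
    then have "-y+x \<in> Q" by simp
    moreover have "x = y + (-y+x)" by (simp add: add_minus_cancel)
    ultimately show "x \<in> (+) y ` Q" by (rule rev_image_eqI)
  qed
qed

lemma translate_eq_vimage_r:
  fixes y :: "'g::group_add"
  shows "(\<lambda>q. q + y) ` Q = (\<lambda>x. x + - y) -` Q"
proof
  show "(\<lambda>q. q + y) ` Q \<subseteq> (\<lambda>x. x + - y) -` Q" by (auto simp: add.assoc)
  show "(\<lambda>x. x + - y) -` Q \<subseteq> (\<lambda>q. q + y) ` Q"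
  proof
    fix x assume "x \<in> (\<lambda>x. x + - y) -` Q"
    then have "x + - y \<in> Q" by simp
    moreover have "x = (x + - y) + y" by (simp add: add.assoc)
    ultimately show "x \<in> (\<lambda>q. q + y) ` Q" by (rule rev_image_eqI)
  qed
qed

lemma open_translate:
  fixes y :: "'g::topological_group_add"
  assumes "open Q" shows "open ((+) y ` Q)" "open ((\<lambda>q. q + y) ` Q)"
proof -
  have "continuous_on UNIV (\<lambda>x::'g. - y + x)" "continuous_on UNIV (\<lambda>x::'g. x + - y)"
    by (intro continuous_intros)+
  then show "open ((+) y ` Q)" "open ((\<lambda>q. q + y) ` Q)"
    unfolding translate_eq_vimage translate_eq_vimage_r
    using assms continuous_on_open_vimage[of UNIV] by auto
qed

lemma esssup_ge_on:
  fixes F :: "'a \<Rightarrow> ennreal"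
  assumes U: "U \<in> sets M" "emeasure M U \<noteq> 0" and c: "\<And>v. v \<in> U \<Longrightarrow> c \<le> F v"
  shows "c \<le> esssup M F"
proof (cases "F \<in> borel_measurable M")
  case False thus ?thesis by (simp add: esssup_non_measurable)
next
  case True
  show ?thesis unfolding esssup_eq_AE[OF True]
  proof (rule Inf_greatest, clarsimp)
    fix z assume z: "AE x in M. F x \<le> z"
    show "c \<le> z"
    proof (rule ccontr)
      assume "\<not> c \<le> z"
      then have "AE x in M. x \<notin> U"
        by (rule_tac eventually_mono[OF z]) (meson c order.trans)
      then have "U \<in> null_sets M" using AE_iff_null_sets[OF U(1)] by simp
      then have "emeasure M U = 0" by (simp add: null_sets_def)
      with U(2) show False by simp
    qed
  qed
qed


lemma setting_facts:
  fixes \<mu> :: "'g::{topological_group_add,t2_space} measure"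
  assumes "lc_group_setting \<mu> Q"
  shows "sets \<mu> = sets borel" "space \<mu> = UNIV" "open Q" "0 \<in> Q" "uminus ` Q = Q"
    "\<And>U. open U \<Longrightarrow> U \<noteq> {} \<Longrightarrow> emeasure \<mu> U \<noteq> 0"
    "\<And>x A. A \<in> sets borel \<Longrightarrow> emeasure \<mu> ((+) x ` A) = emeasure \<mu> A"
    "compact (closure Q)"
    "\<And>K. compact K \<Longrightarrow> emeasure \<mu> K < \<infinity>"
proof -
  have h: "left_haar_measure \<mu>" "open Q" "0 \<in> Q" "uminus ` Q = Q" "compact (closure Q)"
    using assms unfolding lc_group_setting_def by auto
  note H0 = h(1)[unfolded left_haar_measure_def]
  have H: "sets \<mu> = sets borel" "space \<mu> = UNIV"
    "\<forall>x A. A \<in> sets borel \<longrightarrow> emeasure \<mu> ((+) x ` A) = emeasure \<mu> A"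
    "\<forall>K. compact K \<longrightarrow> emeasure \<mu> K < \<infinity>"
    "\<forall>U. open U \<and> U \<noteq> {} \<longrightarrow> emeasure \<mu> U > 0"
    by (rule H0[THEN conjunct1], rule H0[THEN conjunct2, THEN conjunct1],
      rule H0[THEN conjunct2, THEN conjunct2, THEN conjunct1],
      rule H0[THEN conjunct2, THEN conjunct2, THEN conjunct2, THEN conjunct1],
      rule H0[THEN conjunct2, THEN conjunct2, THEN conjunct2, THEN conjunct2, THEN conjunct1])
  show "sets \<mu> = sets borel" "space \<mu> = UNIV" "open Q" "0 \<in> Q" "uminus ` Q = Q" "compact (closure Q)"
    using h H by auto
  show "\<And>U. open U \<Longrightarrow> U \<noteq> {} \<Longrightarrow> emeasure \<mu> U \<noteq> 0" using H(5) by force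
  show "\<And>x A. A \<in> sets borel \<Longrightarrow> emeasure \<mu> ((+) x ` A) = emeasure \<mu> A" using H(3) by blast
  show "\<And>K. compact K \<Longrightarrow> emeasure \<mu> K < \<infinity>" using H(4) by blast
qed

lemma inner_bound:
  fixes \<mu> :: "'g::{topological_group_add,t2_space} measure" and \<Phi> :: "'g \<Rightarrow> real"
  assumes set: "lc_group_setting \<mu> Q" and cont: "continuous_on UNIV \<Phi>"
    and y: "y \<in> (+) v ` Q"
  shows "ennreal (\<Phi> y) \<le> max_left \<mu> Q (\<lambda>y. ennreal (norm (\<Phi> y))) v"
  unfolding max_left_def
proof (rule dense_le)
  note sf = setting_facts[OF set]
  fix d assume d: "d < ennreal (\<Phi> y)"
  then have dtop: "d \<noteq> top" using ennreal_less_top[of "\<Phi> y"] less_trans[of d] by force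
  define r where "r = enn2real d"
  have dr: "d = ennreal r" using dtop by (simp add: r_def less_top)
  have r0: "0 \<le> r" by (simp add: r_def)
  have ry: "r < \<Phi> y" using d unfolding dr using ennreal_less_iff[OF r0] by blast
  define U where "U = (+) v ` Q \<inter> {t. r < \<Phi> t}"
  have "open {t. r < \<Phi> t}" by (rule open_Collect_less) (auto intro: cont continuous_intros)
  then have oU: "open U" unfolding U_def using open_translate(1)[OF sf(3)] by blast
  have "y \<in> U" using y ry unfolding U_def by auto
  have "U \<in> sets \<mu>" using oU sf(1) by simp
  moreover have "emeasure \<mu> U \<noteq> 0" using sf(6)[OF oU] \<open>y \<in> U\<close> by blast
  ultimately show "d \<le> esssup \<mu> (\<lambda>t. if t \<in> (\<lambda>q. v + q) ` Q then ennreal (norm (\<Phi> t)) else 0)"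
  proof (rule esssup_ge_on)
    fix t assume "t \<in> U"
    then have "t \<in> (\<lambda>q. v + q) ` Q" "r < \<Phi> t" unfolding U_def by auto
    then show "d \<le> (if t \<in> (\<lambda>q. v + q) ` Q then ennreal (norm (\<Phi> t)) else 0)"
      using dr by (simp add: ennreal_leI)
  qed
qed


lemma key_bound:
  fixes \<mu> :: "'g::{topological_group_add,t2_space} measure" and \<Phi> :: "'g \<Rightarrow> real"
  assumes set: "lc_group_setting \<mu> Q" and cont: "continuous_on UNIV \<Phi>"
    and w1: "1 \<le> w u" and u: "u \<in> (+) y ` Q"
  shows "ennreal (\<Phi> y) \<le> ennreal (w u) * max_right \<mu> Q (max_left \<mu> Q (\<lambda>y. ennreal (norm (\<Phi> y)))) u"
proof -
  note sf = setting_facts[OF set]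
  define U where "U = (\<lambda>q. q+u)`Q \<inter> (+) y ` Q"
  have oU: "open U" unfolding U_def using open_translate[OF sf(3)] by blast
  have "u \<in> (\<lambda>q. q+u)`Q" using sf(4) by (auto intro: rev_image_eqI[of 0])
  then have uU: "u \<in> U" using u unfolding U_def by blast
  have "ennreal (\<Phi> y) \<le> max_right \<mu> Q (max_left \<mu> Q (\<lambda>y. ennreal (norm (\<Phi> y)))) u"
    unfolding max_right_def
  proof (rule esssup_ge_on[where U=U])
    show "U \<in> sets \<mu>" using oU sf(1) by simp
    show "emeasure \<mu> U \<noteq> 0" using sf(6)[OF oU] uU by blast
    fix v assume "v \<in> U"
    then have v1: "v \<in> (\<lambda>q. q+u)`Q" and "v \<in> (+) y ` Q" unfolding U_def by auto
    then obtain q where q: "q \<in> Q" "v = y + q" by auto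
    have "-q \<in> Q" using q(1) sf(5) by (metis imageI)
    moreover have "y = v + - q" using q(2) by (simp add: add.assoc)
    ultimately have "y \<in> (+) v ` Q" by (rule rev_image_eqI)
    then have "ennreal (\<Phi> y) \<le> max_left \<mu> Q (\<lambda>y. ennreal (norm (\<Phi> y))) v"
      by (rule inner_bound[OF set cont])
    then show "ennreal (\<Phi> y) \<le> (if v \<in> (\<lambda>q. q + u) ` Q then max_left \<mu> Q (\<lambda>y. ennreal (norm (\<Phi> y))) v else 0)"
      using v1 by simp
  qed
  also have "\<dots> \<le> ennreal (w u) * max_right \<mu> Q (max_left \<mu> Q (\<lambda>y. ennreal (norm (\<Phi> y)))) u"
    using mult_right_mono[of 1 "ennreal (w u)"] w1 by (simp add: ennreal_leI)
  finally show ?thesis .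
qed


lemma translate_measurable:
  fixes \<mu> :: "'g::{topological_group_add,t2_space} measure"
  assumes set: "lc_group_setting \<mu> Q"
  shows "(+) a \<in> measurable \<mu> \<mu>"
proof -
  note sf = setting_facts[OF set]
  have "continuous_on UNIV ((+) a)" by (intro continuous_intros)
  then have "(+) a \<in> borel_measurable borel" by (rule borel_measurable_continuous_onI)
  then show ?thesis using sf(1) measurable_cong_sets[of \<mu> borel \<mu> borel] by simp
qed

lemma nn_integral_translate:
  fixes \<mu> :: "'g::{topological_group_add,t2_space} measure" and F :: "'g \<Rightarrow> ennreal"
  assumes set: "lc_group_setting \<mu> Q" and F: "F \<in> borel_measurable \<mu>"
  shows "(\<integral>\<^sup>+x. F (a + x) \<partial>\<mu>) = (\<integral>\<^sup>+x. F x \<partial>\<mu>)"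
proof -
  note sf = setting_facts[OF set]
  note m = translate_measurable[OF set, of a]
  have D: "distr \<mu> \<mu> ((+) a) = \<mu>"
  proof (rule measure_eqI)
    show "sets (distr \<mu> \<mu> ((+) a)) = sets \<mu>" by simp
    fix A assume "A \<in> sets (distr \<mu> \<mu> ((+) a))"
    then have A: "A \<in> sets \<mu>" by simp
    have "(+) a -` A = (+) (-a) ` A" using translate_eq_vimage[of "-a" A] by simp
    then have "emeasure (distr \<mu> \<mu> ((+) a)) A = emeasure \<mu> ((+) (-a) ` A)"
      using emeasure_distr[OF m A] sf(2) by simp
    also have "\<dots> = emeasure \<mu> A" using sf(7) A sf(1) by simp
    finally show "emeasure (distr \<mu> \<mu> ((+) a)) A = emeasure \<mu> A" .
  qed
  have "(\<integral>\<^sup>+x. F (a + x) \<partial>\<mu>) = integral\<^sup>N (distr \<mu> \<mu> ((+) a)) F"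
    using nn_integral_distr[OF m, of F] F by (simp add: measurable_distr_eq1)
  then show ?thesis using D by simp
qed


lemma sum_bound:
  fixes \<mu> :: "'g::{topological_group_add,t2_space} measure" and \<Phi> :: "'g \<Rightarrow> real"
    and lam :: "'i \<Rightarrow> 'g"
  assumes set: "lc_group_setting \<mu> Q" and hm: "h \<in> borel_measurable \<mu>"
    and hb: "\<And>y u. u \<in> (+) y ` Q \<Longrightarrow> ennreal (\<Phi> y) \<le> h u"
    and sep: "\<And>z. finite {i. lam i \<in> (+) z ` Q} \<and> card {i. lam i \<in> (+) z ` Q} \<le> N"
    and F: "finite F"
  shows "emeasure \<mu> Q * (\<Sum>i\<in>F. ennreal (\<Phi> (-x + lam i))) \<le> of_nat N * (\<integral>\<^sup>+u. h u \<partial>\<mu>)"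
proof -
  note sf = setting_facts[OF set]
  define S where "S i = (+) (-x + lam i) ` Q" for i
  have Sm: "S i \<in> sets \<mu>" for i unfolding S_def using open_translate(1)[OF sf(3)] sf(1) by simp
  have mS: "emeasure \<mu> (S i) = emeasure \<mu> Q" for i unfolding S_def using sf(7) sf(3) by simp
  have each: "emeasure \<mu> Q * ennreal (\<Phi> (-x+lam i)) \<le> (\<integral>\<^sup>+u. h u * indicator (S i) u \<partial>\<mu>)" for i
  proof -
    have "emeasure \<mu> Q * ennreal (\<Phi> (-x+lam i)) = (\<integral>\<^sup>+u. ennreal (\<Phi> (-x+lam i)) * indicator (S i) u \<partial>\<mu>)"
      using nn_integral_cmult_indicator[OF Sm[of i], of "ennreal (\<Phi> (-x+lam i))"] mS[of i]
      by (simp add: mult.commute)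
    also have "\<dots> \<le> (\<integral>\<^sup>+u. h u * indicator (S i) u \<partial>\<mu>)"
    proof (rule nn_integral_mono)
      fix u show "ennreal (\<Phi> (-x+lam i)) * indicator (S i) u \<le> h u * indicator (S i) u"
        using hb[of u "-x + lam i"] unfolding S_def by (simp add: indicator_def)
    qed
    finally show ?thesis .
  qed
  have cnt: "(\<Sum>i\<in>F. indicator (S i) u :: ennreal) \<le> of_nat N" for u
  proof -
    have "(\<Sum>i\<in>F. indicator (S i) u :: ennreal) = (\<Sum>i\<in>{i\<in>F. u \<in> S i}. 1)"
      using F by (simp add: indicator_def sum.If_cases Int_def)
    also have "\<dots> = of_nat (card {i\<in>F. u \<in> S i})" by simp
    also have "card {i\<in>F. u \<in> S i} \<le> card {i. lam i \<in> (+) (x + u) ` Q}"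
    proof (rule card_mono)
      show "finite {i. lam i \<in> (+) (x + u) ` Q}" using sep by blast
      show "{i\<in>F. u \<in> S i} \<subseteq> {i. lam i \<in> (+) (x + u) ` Q}"
      proof safe
        fix i assume "i \<in> F" "u \<in> S i"
        then obtain q where q: "q \<in> Q" "u = -x + lam i + q" unfolding S_def by (auto simp: add.assoc)
        have "-q \<in> Q" using q(1) sf(5) by (metis imageI)
        moreover have "lam i = x + u + - q" using q(2) by (simp add: add.assoc)
        ultimately show "lam i \<in> (+) (x + u) ` Q" by (rule rev_image_eqI)
      qed
    qed
    then have "of_nat (card {i\<in>F. u \<in> S i}) \<le> (of_nat N :: ennreal)"
      using sep[of "x+u"] by (simp add: of_nat_le_iff)
    finally show ?thesis .
  qed
  have "emeasure \<mu> Q * (\<Sum>i\<in>F. ennreal (\<Phi> (-x + lam i))) = (\<Sum>i\<in>F. emeasure \<mu> Q * ennreal (\<Phi> (-x + lam i)))"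
    by (simp add: sum_distrib_left)
  also have "\<dots> \<le> (\<Sum>i\<in>F. \<integral>\<^sup>+u. h u * indicator (S i) u \<partial>\<mu>)" by (rule sum_mono) (rule each)
  also have "\<dots> = (\<integral>\<^sup>+u. (\<Sum>i\<in>F. h u * indicator (S i) u) \<partial>\<mu>)"
    by (rule nn_integral_sum[symmetric]) (use hm Sm in measurable)
  also have "\<dots> = (\<integral>\<^sup>+u. h u * (\<Sum>i\<in>F. indicator (S i) u) \<partial>\<mu>)" by (simp add: sum_distrib_left)
  also have "\<dots> \<le> (\<integral>\<^sup>+u. h u * of_nat N \<partial>\<mu>)"
    by (rule nn_integral_mono) (simp add: cnt mult_left_mono)
  also have "\<dots> = of_nat N * (\<integral>\<^sup>+u. h u \<partial>\<mu>)"
    using nn_integral_cmult[OF hm, of "of_nat N"] by (simp add: mult.commute)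
  finally show ?thesis .
qed


lemma inner_est:
  fixes \<mu> :: "'g measure" and f g :: "'g \<Rightarrow> complex" and A B :: "'g \<Rightarrow> real"
  assumes fm[measurable]: "f \<in> borel_measurable \<mu>"
    and Am[measurable]: "A \<in> borel_measurable \<mu>" and Bm[measurable]: "B \<in> borel_measurable \<mu>"
    and A0: "\<And>x. 0 \<le> A x" and B0: "\<And>x. 0 \<le> B x"
    and gb: "\<And>x. cmod (g x) \<le> min (A x) (B x)"
  shows "ennreal ((cmod (L2_inner \<mu> f g))\<^sup>2) \<le> (\<integral>\<^sup>+x. ennreal ((cmod (f x))\<^sup>2 * B x) \<partial>\<mu>) * (\<integral>\<^sup>+x. ennreal (A x) \<partial>\<mu>)"
proof -
  have 1: "ennreal (cmod (L2_inner \<mu> f g)) \<le> (\<integral>\<^sup>+x. ennreal (cmod (f x) * cmod (g x)) \<partial>\<mu>)"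
  proof (cases "integrable \<mu> (\<lambda>x. f x * cnj (g x))")
    case True
    then show ?thesis using integral_norm_bound_ennreal[OF True]
      unfolding L2_inner_def by (simp add: norm_mult)
  next
    case False
    then show ?thesis unfolding L2_inner_def by (simp add: not_integrable_integral_eq)
  qed
  define a where "a x = ennreal (cmod (f x) * sqrt (B x))" for x
  define b where "b x = ennreal (sqrt (A x))" for x
  have am[measurable]: "a \<in> borel_measurable \<mu>" unfolding a_def by measurable
  have bm[measurable]: "b \<in> borel_measurable \<mu>" unfolding b_def by measurable
  have 2: "(\<integral>\<^sup>+x. ennreal (cmod (f x) * cmod (g x)) \<partial>\<mu>) \<le> (\<integral>\<^sup>+x. a x * b x \<partial>\<mu>)"
  proof (rule nn_integral_mono)
    fix x
    have "(cmod (g x))\<^sup>2 \<le> A x * B x"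
      using gb[of x] A0[of x] B0[of x] unfolding power2_eq_square
      by (intro mult_mono) auto
    then have "cmod (g x) \<le> sqrt (A x * B x)" using real_le_rsqrt by blast
    then have "cmod (f x) * cmod (g x) \<le> cmod (f x) * sqrt (B x) * sqrt (A x)"
      using mult_left_mono[of "cmod (g x)" "sqrt (A x) * sqrt (B x)" "cmod (f x)"]
      by (simp add: real_sqrt_mult mult_ac)
    then show "ennreal (cmod (f x) * cmod (g x)) \<le> a x * b x"
      unfolding a_def b_def using B0[of x] A0[of x]
      by (subst ennreal_mult[symmetric]) (auto intro: ennreal_leI)
  qed
  have 3: "(\<integral>\<^sup>+x. a x * b x \<partial>\<mu>)\<^sup>2 \<le> (\<integral>\<^sup>+x. a x ^ 2 \<partial>\<mu>) * (\<integral>\<^sup>+x. b x ^ 2 \<partial>\<mu>)"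
    by (rule Cauchy_Schwarz_nn_integral) measurable
  have a2: "a x ^ 2 = ennreal ((cmod (f x))\<^sup>2 * B x)" for x
    unfolding a_def using B0[of x] by (simp add: ennreal_power power_mult_distrib)
  have b2: "b x ^ 2 = ennreal (A x)" for x
    unfolding b_def using A0[of x] by (simp add: ennreal_power)
  have "ennreal ((cmod (L2_inner \<mu> f g))\<^sup>2) = (ennreal (cmod (L2_inner \<mu> f g)))\<^sup>2"
    by (simp add: ennreal_power)
  also have "\<dots> \<le> (\<integral>\<^sup>+x. a x * b x \<partial>\<mu>)\<^sup>2"
    using 1 2 by (intro power_mono) auto
  also have "\<dots> \<le> (\<integral>\<^sup>+x. ennreal ((cmod (f x))\<^sup>2 * B x) \<partial>\<mu>) * (\<integral>\<^sup>+x. ennreal (A x) \<partial>\<mu>)"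
    using 3 unfolding a2 b2 .
  finally show ?thesis .
qed


lemma cont_meas:
  fixes \<mu> :: "'g::{topological_group_add,t2_space} measure" and F :: "'g \<Rightarrow> real"
  assumes set: "lc_group_setting \<mu> Q" and c: "continuous_on UNIV F"
  shows "F \<in> borel_measurable \<mu>"
proof -
  have "F \<in> borel_measurable borel" using c by (rule borel_measurable_continuous_onI)
  then show ?thesis using setting_facts(1)[OF set] measurable_cong_sets[of \<mu> borel] by simp
qed

theorem lemma4p8:
  fixes \<mu> :: "'g::{topological_group_add,t2_space} measure"
    and Q :: "'g set" and w :: "'g \<Rightarrow> real"
    and K :: "('g \<Rightarrow> complex) set"
    and lam :: "'i \<Rightarrow> 'g" and g :: "'i \<Rightarrow> 'g \<Rightarrow> complex"
  assumes "lc_group_setting \<mu> Q"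
    and "rkhs \<mu> K"
    and "rel_separated Q lam"
    and "admissible_weight w"
    and "molecules \<mu> Q w K lam g"
  shows "\<exists>B>0. \<forall>f\<in>K. (\<lambda>i. (cmod (L2_inner \<mu> f (g i)))\<^sup>2) summable_on UNIV \<and>
           (\<Sum>\<^sub>\<infinity>i. (cmod (L2_inner \<mu> f (g i)))\<^sup>2) \<le> B * (L2_norm \<mu> f)\<^sup>2"
proof -
  note set = assms(1)
  note sf = setting_facts[OF set]
  obtain N where sep: "\<And>z. finite {i. lam i \<in> (+) z ` Q} \<and> card {i. lam i \<in> (+) z ` Q} \<le> N"
    using assms(3) unfolding rel_separated_def by blast
  have w1: "\<And>x. 1 \<le> w x" using assms(4) unfolding admissible_weight_def by blast
  obtain \<Phi> :: "'g \<Rightarrow> real" where \<Phi>0: "\<And>x. \<Phi> x \<ge> 0" and wa: "wiener_amalgam \<mu> Q w \<Phi>"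
    and gb: "\<And>i x. cmod (g i x) \<le> min (\<Phi> (- lam i + x)) (\<Phi> (- x + lam i))"
    using assms(5) unfolding molecules_def by blast
  have gK: "\<And>i. g i \<in> K" using assms(5) unfolding molecules_def by blast
  define h where "h x = ennreal (w x) * max_right \<mu> Q (max_left \<mu> Q (\<lambda>y. ennreal (norm (\<Phi> y)))) x" for x
  have cont: "continuous_on UNIV \<Phi>" and hm: "h \<in> borel_measurable \<mu>" and hfin: "(\<integral>\<^sup>+x. h x \<partial>\<mu>) < \<infinity>"
    using wa unfolding wiener_amalgam_def Let_def h_def[abs_def] by auto
  have hb: "\<And>y u. u \<in> (+) y ` Q \<Longrightarrow> ennreal (\<Phi> y) \<le> h u"
    unfolding h_def by (rule key_bound[OF set cont w1])
  define c1 where "c1 = enn2real (\<integral>\<^sup>+x. h x \<partial>\<mu>)"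
  have C1: "(\<integral>\<^sup>+x. h x \<partial>\<mu>) = ennreal c1" "0 \<le> c1" using hfin by (auto simp: c1_def less_top)
  have \<Phi>m: "(\<lambda>x. \<Phi> (a + x)) \<in> borel_measurable \<mu>" for a
    by (rule cont_meas[OF set]) (intro continuous_intros continuous_on_compose2[OF cont], auto)
  have I1: "(\<integral>\<^sup>+x. ennreal (\<Phi> (a + x)) \<partial>\<mu>) \<le> ennreal c1" for a
  proof -
    have "(\<integral>\<^sup>+x. ennreal (\<Phi> (a + x)) \<partial>\<mu>) \<le> (\<integral>\<^sup>+x. h (a + x) \<partial>\<mu>)"
    proof (rule nn_integral_mono)
      fix x show "ennreal (\<Phi> (a + x)) \<le> h (a + x)"
        by (rule hb) (use sf(4) in \<open>auto intro: rev_image_eqI[of 0]\<close>)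
    qed
    also have "\<dots> = (\<integral>\<^sup>+x. h x \<partial>\<mu>)" by (rule nn_integral_translate[OF set hm])
    finally show ?thesis using C1 by simp
  qed
  have mQ0: "emeasure \<mu> Q \<noteq> 0" using sf(6)[OF sf(3)] sf(4) by blast
  have "emeasure \<mu> Q \<le> emeasure \<mu> (closure Q)"
    by (rule emeasure_mono) (auto simp: sf(1) closure_subset)
  then have mQfin: "emeasure \<mu> Q < \<infinity>" using sf(9)[OF sf(8)] by simp
  define m where "m = enn2real (emeasure \<mu> Q)"
  have M: "emeasure \<mu> Q = ennreal m" "0 < m" using mQ0 mQfin
    by (auto simp: m_def less_top enn2real_positive_iff zero_less_iff_neq_zero)
  define c2 where "c2 = real N * c1 / m"
  have c2: "0 \<le> c2" using C1 M by (simp add: c2_def)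
  have S: "(\<Sum>i\<in>F. ennreal (\<Phi> (-x + lam i))) \<le> ennreal c2" if F: "finite F" for x F
  proof -
    have "emeasure \<mu> Q * (\<Sum>i\<in>F. ennreal (\<Phi> (-x + lam i))) \<le> of_nat N * (\<integral>\<^sup>+u. h u \<partial>\<mu>)"
      by (rule sum_bound[OF set hm hb sep F])
    then have "ennreal (m * (\<Sum>i\<in>F. \<Phi> (-x + lam i))) \<le> ennreal (real N * c1)"
      using M C1 \<Phi>0 by (simp add: ennreal_mult ennreal_of_nat_eq_real_of_nat sum_nonneg)
    then have "m * (\<Sum>i\<in>F. \<Phi> (-x + lam i)) \<le> real N * c1" using C1 by (simp add: ennreal_le_iff)
    then have "(\<Sum>i\<in>F. \<Phi> (-x + lam i)) \<le> c2" using M unfolding c2_def by (simp add: field_simps)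
    then show ?thesis using \<Phi>0 by (simp add: ennreal_leI sum_nonneg)
  qed
  have Bm: "(\<lambda>x. \<Phi> (- x + a)) \<in> borel_measurable \<mu>" for a
    by (rule cont_meas[OF set]) (intro continuous_intros continuous_on_compose2[OF cont], auto)
  have main: "(\<Sum>i\<in>F. (cmod (L2_inner \<mu> f (g i)))\<^sup>2) \<le> c1 * c2 * (L2_norm \<mu> f)\<^sup>2"
    if fK: "f \<in> K" and F: "finite F" for f F
  proof -
    have sq: "square_integrable \<mu> f" using assms(2) fK unfolding rkhs_def by blast
    then have fm[measurable]: "f \<in> borel_measurable \<mu>" and fi: "integrable \<mu> (\<lambda>x. (cmod (f x))\<^sup>2)"
      unfolding square_integrable_def by auto
    have Lf: "(\<integral>\<^sup>+x. ennreal ((cmod (f x))\<^sup>2) \<partial>\<mu>) = ennreal ((L2_norm \<mu> f)\<^sup>2)"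
      unfolding L2_norm_def using nn_integral_eq_integral[OF fi] integral_nonneg_AE[of "\<lambda>x. (cmod (f x))\<^sup>2" \<mu>]
      by simp
    have each: "ennreal ((cmod (L2_inner \<mu> f (g i)))\<^sup>2) \<le>
        (\<integral>\<^sup>+x. ennreal ((cmod (f x))\<^sup>2 * \<Phi> (-x + lam i)) \<partial>\<mu>) * ennreal c1" for i
    proof -
      have "ennreal ((cmod (L2_inner \<mu> f (g i)))\<^sup>2) \<le>
        (\<integral>\<^sup>+x. ennreal ((cmod (f x))\<^sup>2 * \<Phi> (-x + lam i)) \<partial>\<mu>) * (\<integral>\<^sup>+x. ennreal (\<Phi> (- lam i + x)) \<partial>\<mu>)"
        by (rule inner_est[OF fm \<Phi>m[of "-lam i"] Bm[of "lam i"] \<Phi>0 \<Phi>0 gb])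
      also have "\<dots> \<le> (\<integral>\<^sup>+x. ennreal ((cmod (f x))\<^sup>2 * \<Phi> (-x + lam i)) \<partial>\<mu>) * ennreal c1"
        by (rule mult_left_mono[OF I1]) simp
      finally show ?thesis .
    qed
    have pt: "(\<Sum>i\<in>F. ennreal ((cmod (f x))\<^sup>2 * \<Phi> (-x + lam i))) \<le> ennreal ((cmod (f x))\<^sup>2) * ennreal c2" for x
    proof -
      have "(\<Sum>i\<in>F. ennreal ((cmod (f x))\<^sup>2 * \<Phi> (-x + lam i))) = ennreal ((cmod (f x))\<^sup>2) * (\<Sum>i\<in>F. ennreal (\<Phi> (-x + lam i)))"
        using \<Phi>0 by (simp add: ennreal_mult sum_distrib_left[symmetric] del: sum_ennreal)
      also have "\<dots> \<le> ennreal ((cmod (f x))\<^sup>2) * ennreal c2"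
        by (rule mult_left_mono[OF S[OF F]]) simp
      finally show ?thesis .
    qed
    have "ennreal (\<Sum>i\<in>F. (cmod (L2_inner \<mu> f (g i)))\<^sup>2) = (\<Sum>i\<in>F. ennreal ((cmod (L2_inner \<mu> f (g i)))\<^sup>2))"
      by simp
    also have "\<dots> \<le> (\<Sum>i\<in>F. (\<integral>\<^sup>+x. ennreal ((cmod (f x))\<^sup>2 * \<Phi> (-x + lam i)) \<partial>\<mu>) * ennreal c1)"
      by (rule sum_mono) (rule each)
    also have "\<dots> = (\<integral>\<^sup>+x. (\<Sum>i\<in>F. ennreal ((cmod (f x))\<^sup>2 * \<Phi> (-x + lam i))) \<partial>\<mu>) * ennreal c1"
      using Bm by (subst nn_integral_sum) (auto simp: sum_distrib_right)
    also have "\<dots> \<le> (\<integral>\<^sup>+x. ennreal ((cmod (f x))\<^sup>2) * ennreal c2 \<partial>\<mu>) * ennreal c1"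
      by (intro mult_right_mono nn_integral_mono pt) simp
    also have "\<dots> = ennreal ((L2_norm \<mu> f)\<^sup>2) * ennreal c2 * ennreal c1"
      by (simp add: nn_integral_multc Lf)
    also have "\<dots> = ennreal (c1 * c2 * (L2_norm \<mu> f)\<^sup>2)"
      using C1 c2 by (simp add: ennreal_mult mult_ac)
    finally show ?thesis using C1 c2 by (simp add: ennreal_le_iff)
  qed
  show ?thesis
  proof (intro exI[of _ "c1 * c2 + 1"] conjI ballI)
    show "0 < c1 * c2 + 1" using C1(2) c2 by (smt (verit) mult_nonneg_nonneg)
    fix f assume fK: "f \<in> K"
    have bd: "(\<Sum>i\<in>F. (cmod (L2_inner \<mu> f (g i)))\<^sup>2) \<le> (c1 * c2 + 1) * (L2_norm \<mu> f)\<^sup>2" if "finite F" for F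
      using main[OF fK that] by (smt (verit) mult_right_mono zero_le_power2)
    show sm: "(\<lambda>i. (cmod (L2_inner \<mu> f (g i)))\<^sup>2) summable_on UNIV"
      by (rule nonneg_bdd_above_summable_on) (use bd in \<open>auto intro!: bdd_aboveI\<close>)
    show "(\<Sum>\<^sub>\<infinity>i. (cmod (L2_inner \<mu> f (g i)))\<^sup>2) \<le> (c1 * c2 + 1) * (L2_norm \<mu> f)\<^sup>2"
      by (rule infsum_le_finite_sums[OF sm bd])
  qed
qed

end
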